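(* Let $G$ be a Tutte-Berge graph such that the induced subgraph of $G$ on $D(G)$ has no isolated vertices. Then $D(G)=\emptyset$ and $G$ has a perfect matching.
   Context: $\nu(G)$ is the matching number of $G$. For $U\subseteq V(G)$, $N_G(U)$ is the set of vertices adjacent to at least one vertex of $U$. $G$ is a Tutte-Berge graph if there exists an independent set $T$ of $G$ with $|T| = |N_G(T)| + |V(G)| - 2\nu(G)$. $D(G)$ is the set of vertices of $G$ left uncovered by at least one maximum matching of $G$. *)

theory Defs
  imports Main
begin

definition simple_graph :: "'a set \<Rightarrow> 'a set set \<Rightarrow> bool" where
  "simple_graph V E \<longleftrightarrow> finite V \<and>
     (\<forall>e\<in>E. \<exists>u v. e = {u, v} \<and> u \<noteq> v \<and> u \<in> V \<and> v \<in> V)"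

definition matching :: "'a set set \<Rightarrow> 'a set set \<Rightarrow> bool" where
  "matching E M \<longleftrightarrow> M \<subseteq> E \<and> (\<forall>e1\<in>M. \<forall>e2\<in>M. e1 \<noteq> e2 \<longrightarrow> e1 \<inter> e2 = {})"

definition matching_number :: "'a set set \<Rightarrow> nat" where
  "matching_number E = Max (card ` {M. matching E M})"

definition max_matching :: "'a set set \<Rightarrow> 'a set set \<Rightarrow> bool" where
  "max_matching E M \<longleftrightarrow> matching E M \<and> card M = matching_number E"

definition perfect_matching :: "'a set \<Rightarrow> 'a set set \<Rightarrow> 'a set set \<Rightarrow> bool" where
  "perfect_matching V E M \<longleftrightarrow> matching E M \<and> \<Union>M = V"

definition nbhd :: "'a set set \<Rightarrow> 'a set \<Rightarrow> 'a set" where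
  "nbhd E U = {v. \<exists>u\<in>U. {u, v} \<in> E}"

definition independent :: "'a set set \<Rightarrow> 'a set \<Rightarrow> bool" where
  "independent E T \<longleftrightarrow> (\<forall>u\<in>T. \<forall>v\<in>T. {u, v} \<notin> E)"

definition tutte_berge_graph :: "'a set \<Rightarrow> 'a set set \<Rightarrow> bool" where
  "tutte_berge_graph V E \<longleftrightarrow> (\<exists>T. T \<subseteq> V \<and> independent E T \<and>
     int (card T) = int (card (nbhd E T)) + int (card V) - 2 * int (matching_number E))"

definition D_set :: "'a set \<Rightarrow> 'a set set \<Rightarrow> 'a set" where
  "D_set V E = {v\<in>V. \<exists>M. max_matching E M \<and> v \<notin> \<Union>M}"

end

theory Submission
  imports Defs
begin

lemma sg_E: assumes "simple_graph V E" shows "finite E" "E \<subseteq> Pow V"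
  "\<And>e. e \<in> E \<Longrightarrow> \<exists>u v. e = {u, v} \<and> u \<noteq> v \<and> u \<in> V \<and> v \<in> V"
proof -
  have fV: "finite V" and ed: "\<forall>e\<in>E. \<exists>u v. e = {u, v} \<and> u \<noteq> v \<and> u \<in> V \<and> v \<in> V"
    using assms unfolding simple_graph_def by simp_all
  show ee: "\<And>e. e \<in> E \<Longrightarrow> \<exists>u v. e = {u, v} \<and> u \<noteq> v \<and> u \<in> V \<and> v \<in> V"
    using ed by (rule bspec)
  show EP: "E \<subseteq> Pow V"
  proof
    fix e assume "e \<in> E"
    from ee[OF this] obtain u v where "e = {u, v}" "u \<in> V" "v \<in> V" by auto
    then show "e \<in> Pow V" by simp
  qed
  show "finite E" using finite_subset[OF EP] fV by simp
qed

lemma edge_neq: assumes "simple_graph V E" "{t, w} \<in> E" shows "t \<noteq> w"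
proof -
  obtain u v where "{t,w} = {u,v}" "u \<noteq> v" using sg_E(3)[OF assms(1) assms(2)] by blast
  then show ?thesis by (cases "t = w") auto
qed

lemma card_union_matching:
  assumes "simple_graph V E" "matching E M"
  shows "card (\<Union>M) = 2 * card M"
proof -
  have ME: "M \<subseteq> E" and disj: "\<forall>e1\<in>M. \<forall>e2\<in>M. e1 \<noteq> e2 \<longrightarrow> e1 \<inter> e2 = {}"
    using assms(2) unfolding matching_def by simp_all
  have two: "card e = 2" if "e \<in> M" for e
  proof -
    have "e \<in> E" using ME that by (rule subsetD)
    from sg_E(3)[OF assms(1) this] obtain u v where "e = {u,v}" "u \<noteq> v" by auto
    then show ?thesis by simp
  qed
  have "card (\<Union>M) = sum card M"
  proof (rule card_Union_disjoint)
    show "pairwise disjnt M" unfolding pairwise_def disjnt_def using disj by simp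
    show "finite A" if "A \<in> M" for A using two[OF that] by (simp add: card_ge_0_finite)
  qed
  also have "\<dots> = sum (\<lambda>_. 2) M" using two by (rule sum.cong[OF refl])
  finally show ?thesis by simp
qed

lemma max_matching_exists:
  assumes "simple_graph V E" shows "\<exists>M. max_matching E M"
proof -
  have fin: "finite {M. matching E M}"
    using sg_E(1)[OF assms] by (rule rev_finite_subset[OF finite_Pow_iff[THEN iffD2]]) (auto simp: matching_def)
  have ne: "{M. matching E M} \<noteq> {}" unfolding matching_def by blast
  have "matching_number E \<in> card ` {M. matching E M}"
    unfolding matching_number_def using fin ne by (intro Max_in) auto
  then obtain M where "matching E M" "card M = matching_number E" by auto
  then show ?thesis unfolding max_matching_def by blast
qed

lemma uncovered_in_T:
  assumes sg: "simple_graph V E" and T: "T \<subseteq> V"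
    and eq: "int (card T) = int (card (nbhd E T)) + int (card V) - 2 * int (matching_number E)"
    and mm: "max_matching E M" and v: "v \<in> V" "v \<notin> \<Union>M"
  shows "v \<in> T"
proof -
  have m: "matching E M" and cM: "card M = matching_number E" using mm unfolding max_matching_def by auto
  have ME: "M \<subseteq> E" using m unfolding matching_def by blast
  have fV: "finite V" using sg unfolding simple_graph_def by blast
  have UV: "\<Union>M \<subseteq> V" using ME sg_E(2)[OF sg] by blast
  have cU: "card (\<Union>M) = 2 * card M" by (rule card_union_matching[OF sg m])
  define U where "U = V - \<Union>M"
  have cardU: "card U = card V - card (\<Union>M)" unfolding U_def by (rule card_Diff_subset[OF finite_subset[OF UV fV] UV])
  have cUle: "card (\<Union>M) \<le> card V" by (rule card_mono[OF fV UV])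
  have nbV: "nbhd E T \<subseteq> V" unfolding nbhd_def using sg_E(2)[OF sg] by blast
  define Tm where "Tm = T \<inter> \<Union>M"
  define g where "g t = (SOME w. {t, w} \<in> M)" for t
  have gM: "{t, g t} \<in> M" if tU: "t \<in> \<Union>M" for t
  proof -
    obtain e where e: "e \<in> M" "t \<in> e" using tU by blast
    have "e \<in> E" using e(1) ME by (rule subsetD[rotated])
    from sg_E(3)[OF sg this] obtain a b where ab: "e = {a,b}" by blast
    with e have "t = a \<or> t = b" by blast
    then have "{t,b} \<in> M \<or> {t,a} \<in> M"
    proof
      assume "t = a" then show ?thesis using e(1) ab by simp
    next
      assume "t = b" then have "{t,a} = e" using ab by (simp add: insert_commute)
      then show ?thesis using e(1) by simp
    qed
    then have "\<exists>w. {t,w} \<in> M" by blast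
    then show ?thesis unfolding g_def by (rule someI_ex)
  qed
  have inj: "inj_on g Tm"
  proof (rule inj_onI)
    fix t1 t2 assume a: "t1 \<in> Tm" "t2 \<in> Tm" "g t1 = g t2"
    have e1: "{t1, g t1} \<in> M" using a(1) gM unfolding Tm_def by blast
    have e2: "{t2, g t2} \<in> M" using a(2) gM unfolding Tm_def by blast
    have "{t1, g t1} = {t2, g t2}"
    proof (rule ccontr)
      assume "{t1, g t1} \<noteq> {t2, g t2}"
      moreover have disj: "\<forall>e1\<in>M. \<forall>e2\<in>M. e1 \<noteq> e2 \<longrightarrow> e1 \<inter> e2 = {}"
        using m unfolding matching_def by (rule conjunct2)
      ultimately have "{t1, g t1} \<inter> {t2, g t2} = {}" using disj e1 e2 by simp
      then show False using a(3) by auto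
    qed
    moreover have "t1 \<noteq> g t1" using edge_neq[OF sg] e1 ME by blast
    ultimately show "t1 = t2" using a(3) by (simp add: doubleton_eq_iff)
  qed
  have gN: "g ` Tm \<subseteq> nbhd E T"
  proof
    fix x assume "x \<in> g ` Tm"
    then obtain t where "t \<in> Tm" "x = g t" by blast
    then show "x \<in> nbhd E T" using gM[of t] ME unfolding Tm_def nbhd_def by auto
  qed
  have cTm: "card Tm \<le> card (nbhd E T)"
    by (rule card_inj_on_le[OF inj gN finite_subset[OF nbV fV]])
  have fT: "finite T" using finite_subset[OF T fV] .
  have cT: "card T = card Tm + card (T - \<Union>M)" unfolding Tm_def using fT
    by (rule card_Int_Diff)
  have sub: "T - \<Union>M \<subseteq> U" unfolding U_def using T by blast
  have fUU: "finite U" unfolding U_def using fV by blast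
  have "int (card T + 2 * matching_number E) = int (card (nbhd E T) + card V)"
    using eq by simp
  then have e1: "card T + 2 * matching_number E = card (nbhd E T) + card V"
    by (simp only: of_nat_eq_iff)
  have cU2: "card U = card V - 2 * matching_number E" using cardU cU cM by simp
  have "card U \<le> card (T - \<Union>M)"
  proof -
    have "card V \<le> card (T - \<Union>M) + 2 * matching_number E" using e1 cT cTm by linarith
    then show ?thesis unfolding cU2 by linarith
  qed
  then have "T - \<Union>M = U" by (rule card_seteq[OF fUU sub])
  moreover have "v \<in> U" unfolding U_def using v by blast
  ultimately show ?thesis by blast
qed

theorem lemma2p9:
  fixes V :: "'a set" and E :: "'a set set"
  assumes "simple_graph V E"
    and "tutte_berge_graph V E"
    and "\<forall>v\<in>D_set V E. \<exists>u\<in>D_set V E. {u, v} \<in> E"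
  shows "D_set V E = {} \<and> (\<exists>M. perfect_matching V E M)"
proof -
  obtain T where T: "T \<subseteq> V" "independent E T"
    "int (card T) = int (card (nbhd E T)) + int (card V) - 2 * int (matching_number E)"
    using assms(2) unfolding tutte_berge_graph_def by blast
  have DT: "D_set V E \<subseteq> T"
  proof
    fix v assume "v \<in> D_set V E"
    then have vV: "v \<in> V" and "\<exists>M. max_matching E M \<and> v \<notin> \<Union>M" unfolding D_set_def by auto
    then obtain M where "max_matching E M" "v \<notin> \<Union>M" by blast
    from uncovered_in_T[OF assms(1) T(1) T(3) this(1) vV this(2)] show "v \<in> T" .
  qed
  have D: "D_set V E = {}"
  proof (rule ccontr)
    assume "D_set V E \<noteq> {}"
    then obtain v where v: "v \<in> D_set V E" by blast
    then obtain u where u: "u \<in> D_set V E" "{u,v} \<in> E" using assms(3) by blast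
    have "u \<in> T" using u(1) DT by (rule subsetD[rotated])
    have "v \<in> T" using v DT by (rule subsetD[rotated])
    with \<open>u \<in> T\<close> have "{u,v} \<notin> E" using T(2) unfolding independent_def by simp
    then show False using u(2) by contradiction
  qed
  obtain M where M: "max_matching E M" using max_matching_exists[OF assms(1)] by blast
  have mM: "matching E M" using M unfolding max_matching_def by simp
  have "M \<subseteq> E" using mM unfolding matching_def by simp
  then have "\<Union>M \<subseteq> V" using sg_E(2)[OF assms(1)] by blast
  moreover have "V \<subseteq> \<Union>M"
  proof
    fix v assume vV: "v \<in> V"
    show "v \<in> \<Union>M"
    proof (rule ccontr)
      assume "v \<notin> \<Union>M"
      then have "v \<in> D_set V E" unfolding D_set_def using vV M by blast
      then show False using D by simp
    qed
  qed
  ultimately have "\<Union>M = V" by (rule subset_antisym)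
  then have "perfect_matching V E M" using mM unfolding perfect_matching_def by simp
  with D show ?thesis by blast
qed

end
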